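(* Let $(a_n)_{n\ge0}$ be the sequence defined by \[ \sum_{n=0}^{\infty}a_nz^n=\frac{1+36z+\sqrt{(1-12z)^3}}{2(1+4z)^2} \] (the sequence $1,1,3,14,83,570,\dots$, OEIS A220910). Then for all $n\ge2$, \[ n a_n=(8n-34)a_{n-1}+24(2n-3)a_{n-2}. \]
   Context: The square root is the branch analytic near $z=0$ with value $1$ at $z=0$. *)

theory Defs
  imports "HOL-Complex_Analysis.Complex_Analysis"
begin

text \<open>The generating function. csqrt is the principal square root; near z = 0 the
argument (1-12z)^3 lies near 1, so this is the branch analytic near 0 with value 1 at 0.\<close>
definition genf :: "complex \<Rightarrow> complex" where
  "genf z = (1 + 36 * z + csqrt ((1 - 12 * z) ^ 3)) / (2 * (1 + 4 * z) ^ 2)"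

definition a :: "nat \<Rightarrow> complex" where
  "a n = (deriv ^^ n) genf 0 / fact n"

end

theory Submission
  imports Defs
begin

definition Sq :: "complex \<Rightarrow> complex" where "Sq z = csqrt ((1 - 12 * z) ^ 3)"

lemma Sq_exp: "Sq has_fps_expansion fps_expansion Sq 0"
proof (rule analytic_at_imp_has_fps_expansion_0)
  show "Sq analytic_on {0}" unfolding Sq_def
    by (intro analytic_intros) (auto simp: complex_nonpos_Reals_iff)
qed

lemma sq_rel: "fps_expansion Sq 0 * fps_expansion Sq 0 = (1 - 12 * fps_X) * (1 - 12 * fps_X) * (1 - 12 * fps_X)"
proof (rule fps_expansion_unique_complex)
  show "(\<lambda>z. Sq z * Sq z) has_fps_expansion fps_expansion Sq 0 * fps_expansion Sq 0"
    by (intro has_fps_expansion_mult Sq_exp)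
  have e: "(\<lambda>z. Sq z * Sq z) = (\<lambda>z::complex. (1 - 12 * z) * (1 - 12 * z) * (1 - 12 * z))"
  proof
    fix z :: complex
    have "Sq z * Sq z = (1 - 12 * z) ^ 3"
      unfolding Sq_def power2_eq_square[symmetric] by (rule power2_csqrt)
    thus "Sq z * Sq z = (1 - 12 * z) * (1 - 12 * z) * (1 - 12 * z)"
      by (simp only: power3_eq_cube)
  qed
  have "(\<lambda>z::complex. (1 - 12 * z) * (1 - 12 * z) * (1 - 12 * z)) has_fps_expansion (1 - 12 * fps_X) * (1 - 12 * fps_X) * (1 - 12 * fps_X)"
    by (intro has_fps_expansion_mult has_fps_expansion_diff has_fps_expansion_1 has_fps_expansion_cmult_left has_fps_expansion_fps_X has_fps_expansion_numeral)
  thus "(\<lambda>z. Sq z * Sq z) has_fps_expansion (1 - 12 * fps_X) * (1 - 12 * fps_X) * (1 - 12 * fps_X)"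
    unfolding e .
qed

lemma alg1:
  fixes s sd p :: "'a :: idom"
  assumes "s * s = p * p * p" "sd * s + s * sd = -36 * (p * p)" "p \<noteq> 0"
  shows "2 * p * sd = - 36 * s"
proof -
  have nz: "p * p \<noteq> 0" using assms(3) by simp
  have eq: "(p * p) * (2 * p * sd) = (p * p) * (- 36 * s)"
  proof -
    have "(p * p) * (2 * p * sd) = (s * s) * (2 * sd)" using assms(1) by (simp add: algebra_simps)
    also have "\<dots> = s * (sd * s + s * sd)" by (simp add: algebra_simps)
    also have "\<dots> = (p * p) * (- 36 * s)" using assms(2) by (simp add: algebra_simps)
    finally show ?thesis .
  qed
  show ?thesis using mult_left_cancel[OF nz] eq by blast
qed

lemma sq_ode: "2 * (1 - 12 * fps_X) * fps_deriv (fps_expansion Sq 0) = - 36 * fps_expansion Sq 0"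
proof (rule alg1[OF sq_rel])
  have "fps_deriv (fps_expansion Sq 0 * fps_expansion Sq 0) = fps_deriv ((1 - 12 * fps_X) * (1 - 12 * fps_X) * (1 - 12 * fps_X) :: complex fps)"
    using sq_rel by simp
  also have "\<dots> = -36 * ((1 - 12 * fps_X) * (1 - 12 * fps_X))"
    by (simp add: algebra_simps)
  finally show "fps_deriv (fps_expansion Sq 0) * fps_expansion Sq 0 + fps_expansion Sq 0 * fps_deriv (fps_expansion Sq 0) = -36 * ((1 - 12 * fps_X) * (1 - 12 * fps_X))"
    by simp
  show "(1 - 12 * fps_X :: complex fps) \<noteq> 0"
  proof
    assume "(1 - 12 * fps_X :: complex fps) = 0"
    hence "(1 - 12 * fps_X :: complex fps) $ 0 = 0" by simp
    thus False by simp
  qed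
qed

lemma dD: "fps_deriv (2 * ((1 + 4 * fps_X) * (1 + 4 * fps_X)) :: complex fps) = 16 * (1 + 4 * fps_X)"
proof -
  have a: "fps_deriv (1 + 4 * fps_X :: complex fps) = 4" by simp
  have "fps_deriv (2 * ((1 + 4 * fps_X) * (1 + 4 * fps_X)) :: complex fps) = 2 * ((1 + 4 * fps_X) * 4 + 4 * (1 + 4 * fps_X))"
    by (simp only: fps_deriv_mult a fps_deriv_numeral mult_zero_left mult_zero_right add_0_left add_0_right)
  also have "\<dots> = 16 * (1 + 4 * fps_X)" by (simp only: ring_distribs mult_ac add_ac) simp
  finally show ?thesis .
qed
lemma genf_eq: "genf = (\<lambda>z. (1 + 36 * z + Sq z) * inverse (2 * ((1 + 4 * z) * (1 + 4 * z))))"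
  unfolding genf_def Sq_def divide_inverse power2_eq_square ..

lemma genf_exp: "genf has_fps_expansion
   (1 + 36 * fps_X + fps_expansion Sq 0) * inverse (2 * ((1 + 4 * fps_X) * (1 + 4 * fps_X)))"
  unfolding genf_eq
  by (intro has_fps_expansion_mult has_fps_expansion_add has_fps_expansion_inverse Sq_exp
      has_fps_expansion_const has_fps_expansion_numeral has_fps_expansion_1 has_fps_expansion_fps_X) simp_all

lemma G_rel: "fps_expansion genf 0 * (2 * ((1 + 4 * fps_X) * (1 + 4 * fps_X))) = 1 + 36 * fps_X + fps_expansion Sq 0"
proof -
  have nz: "(2 * ((1 + 4 * fps_X) * (1 + 4 * fps_X)) :: complex fps) $ 0 \<noteq> 0" by simp
  show ?thesis unfolding fps_expansion_eqI[OF genf_exp]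
    using inverse_mult_eq_1[OF nz] by (simp add: mult.assoc)
qed

lemma alg2:
  fixes x g gd s sd :: "'a :: comm_ring_1"
  assumes "g * (2 * ((1 + 4 * x) * (1 + 4 * x))) = 1 + 36 * x + s"
    and "gd * (2 * ((1 + 4 * x) * (1 + 4 * x))) + g * (16 * (1 + 4 * x)) = 36 + sd"
    and "2 * (1 - 12 * x) * sd = - 36 * s"
  shows "(2 * (1 + 4 * x)) * (2 * (1 - 8 * x - 48 * (x * x)) * gd + (52 - 48 * x) * g) = (2 * (1 + 4 * x)) * 54"
proof -
  have "(2 * (1 + 4 * x)) * (2 * (1 - 8 * x - 48 * (x * x)) * gd + (52 - 48 * x) * g)
     = 2 * (1 - 12 * x) * (gd * (2 * ((1 + 4 * x) * (1 + 4 * x))) + g * (16 * (1 + 4 * x)))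
       + 36 * (g * (2 * ((1 + 4 * x) * (1 + 4 * x))))"
    by (simp add: ring_distribs mult_ac add_ac)
  also have "\<dots> = 2 * (1 - 12 * x) * (36 + sd) + 36 * (1 + 36 * x + s)"
    by (simp only: assms(1,2))
  also have "\<dots> = 72 * (1 - 12 * x) + 2 * (1 - 12 * x) * sd + 36 * (1 + 36 * x + s)"
    by (simp add: ring_distribs mult_ac add_ac)
  also have "\<dots> = 72 * (1 - 12 * x) + (- 36 * s) + 36 * (1 + 36 * x + s)"
    by (simp only: assms(3))
  also have "\<dots> = (2 * (1 + 4 * x)) * 54"
    by (simp add: ring_distribs mult_ac add_ac)
  finally show ?thesis .
qed

lemma G_ode: "2 * (1 - 8 * fps_X - 48 * fps_X^2) * fps_deriv (fps_expansion genf 0)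
   + (52 - 48 * fps_X) * fps_expansion genf 0 = 54"
proof -
  define G where "G = fps_expansion genf 0"
  define S where "S = fps_expansion Sq 0"
  have h: "G * (2 * ((1 + 4 * fps_X) * (1 + 4 * fps_X))) = 1 + 36 * fps_X + S" using G_rel G_def S_def by simp
  have dD: "fps_deriv (2 * ((1 + 4 * fps_X) * (1 + 4 * fps_X)) :: complex fps) = 16 * (1 + 4 * fps_X)" by (rule dD)
  have m: "fps_deriv (G * (2 * ((1 + 4 * fps_X) * (1 + 4 * fps_X)))) = fps_deriv G * (2 * ((1 + 4 * fps_X) * (1 + 4 * fps_X))) + G * fps_deriv (2 * ((1 + 4 * fps_X) * (1 + 4 * fps_X)))"
    by (simp only: fps_deriv_mult add.commute)
  have r: "fps_deriv (1 + 36 * fps_X + S) = 36 + fps_deriv S" by simp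
  have dh: "fps_deriv G * (2 * ((1 + 4 * fps_X) * (1 + 4 * fps_X))) + G * (16 * (1 + 4 * fps_X)) = 36 + fps_deriv S"
  proof -
    have "fps_deriv G * (2 * ((1 + 4 * fps_X) * (1 + 4 * fps_X))) + G * (16 * (1 + 4 * fps_X))
        = fps_deriv (G * (2 * ((1 + 4 * fps_X) * (1 + 4 * fps_X))))" by (simp only: m dD)
    also have "\<dots> = fps_deriv (1 + 36 * fps_X + S)" by (simp only: h)
    also have "\<dots> = 36 + fps_deriv S" by (rule r)
    finally show ?thesis .
  qed
  have so: "2 * (1 - 12 * fps_X) * fps_deriv S = - 36 * S" unfolding S_def by (rule sq_ode)
  have eq: "(2 * (1 + 4 * fps_X)) * (2 * (1 - 8 * fps_X - 48 * (fps_X * fps_X)) * fps_deriv G + (52 - 48 * fps_X) * G) = (2 * (1 + 4 * fps_X)) * 54"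
    by (rule alg2[OF h dh so])
  have nz: "(2 * (1 + 4 * fps_X) :: complex fps) \<noteq> 0"
  proof
    assume "(2 * (1 + 4 * fps_X) :: complex fps) = 0"
    hence "(2 * (1 + 4 * fps_X) :: complex fps) $ 0 = 0" by simp
    thus False by simp
  qed
  have "2 * (1 - 8 * fps_X - 48 * (fps_X * fps_X)) * fps_deriv G + (52 - 48 * fps_X) * G = 54"
    using eq nz by (subst (asm) mult_left_cancel[OF nz])
  thus ?thesis unfolding G_def by (simp only: power2_eq_square)
qed

lemma coef:
  fixes G :: "complex fps"
  assumes "2 * (1 - 8 * fps_X - 48 * fps_X^2) * fps_deriv G + (52 - 48 * fps_X) * G = 54"
  shows "of_nat (k+2) * G $ (k+2) = (8 * of_nat (k+2) - 34) * G $ (k+1) + 24 * (2 * of_nat (k+2) - 3) * G $ k"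
proof -
  have e: "2 * (1 - 8 * fps_X - 48 * fps_X^2) * fps_deriv G + (52 - 48 * fps_X) * G =
     2 * fps_deriv G - 16 * (fps_X * fps_deriv G) - 96 * (fps_X * (fps_X * fps_deriv G)) + 52 * G - 48 * (fps_X * G)"
    by (simp add: power2_eq_square algebra_simps)
  have "(2 * fps_deriv G - 16 * (fps_X * fps_deriv G) - 96 * (fps_X * (fps_X * fps_deriv G)) + 52 * G - 48 * (fps_X * G)) $ Suc k = (54::complex fps) $ Suc k"
    using assms e by simp
  hence "2 * (of_nat k + 2) * G $ (k+2) - 16 * (of_nat k + 1) * G $ (k+1) - 96 * of_nat k * G $ k + 52 * G $ (k+1) - 48 * G $ k = 0"
    by (cases k) (auto simp: fps_numeral_fps_const algebra_simps)
  hence "(2::complex) * (of_nat (k+2) * G $ (k+2)) = 2 * ((8 * of_nat (k+2) - 34) * G $ (k+1) + 24 * (2 * of_nat (k+2) - 3) * G $ k)"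
    by (simp add: algebra_simps)
  thus ?thesis by (metis mult_left_cancel zero_neq_numeral)
qed

lemma mt:
  fixes n :: nat
  assumes "n \<ge> 2"
  and GO: "2 * (1 - 8 * fps_X - 48 * fps_X^2) * fps_deriv (fps_expansion genf 0)
   + (52 - 48 * fps_X) * fps_expansion genf 0 = 54"
  shows "of_nat n * a n = (8 * of_nat n - 34) * a (n - 1) + 24 * (2 * of_nat n - 3) * a (n - 2)"
proof -
  obtain k where n: "n = k + 2" using le_Suc_ex[OF assms(1)] by (auto simp: add.commute)
  have an: "\<And>m. a m = fps_expansion genf 0 $ m" by (simp add: fps_expansion_def a_def)
  have "n - 1 = k + 1" "n - 2 = k" using n by auto
  then show ?thesis using coef[OF GO, of k] unfolding an n by simp
qed

theorem mainTheorem7: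
  fixes n :: nat
  assumes "n \<ge> 2"
  shows "of_nat n * a n = (8 * of_nat n - 34) * a (n - 1) + 24 * (2 * of_nat n - 3) * a (n - 2)"
  by (rule mt[OF assms G_ode])

end
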